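(* Let $\mathcal G$ be a pseudogroup on a compact metric space $X$ with finite symmetric generating set $\mathcal G_1$, and let $\mu$ be a Borel probability measure on $X$ which is $\mathcal G$-invariant, ergodic and $(\mathcal G,\mathcal G_1)$-homogeneous, and such that $\overline{h}_\mu((\mathcal G,\mathcal G_1),x)>0$ for every $x\in X$. Then $\mu$ is $(\mathcal G,\mathcal G_1)$-weakly expansive, i.e. there exists $\delta>0$ such that $\mu(\Phi_\delta(x))=0$ for $\mu$-a.e. $x\in X$.
   Context: $(X,d)$ is a compact metric space. $\mathrm{Homeo}(X)$ is the set of homeomorphisms $g:D_g\to R_g$ between open subsets of $X$; compositions are taken on their natural domains, $D_{h\circ g}=g^{-1}(D_h)$, and $g(A)$ means $g(A\cap D_g)$. A pseudogroup is a set $\mathcal G\subset\mathrm{Homeo}(X)$ containing $\mathrm{id}_X$, closed under composition, inversion and restriction to open subsets of the domain, and such that if $g\in\mathrm{Homeo}(X)$ and $D_g$ has an open cover $\mathcal U$ with $g|_U\in\mathcal G$ for all $U$, then $g\in\mathcal G$. $\mathcal G_1$ generates $\mathcal G$ means: $\bigcup_{g\in\mathcal G_1}(D_g\cup R_g)=X$ and $\mathcal G$ is exactly the set of $g\in\mathrm{Homeo}(X)$ that near each point of $D_g$ coincide with a finite composition of elements of $\mathcal G_1$ and their inverses; symmetric means $\mathrm{id}_X\in\mathcal G_1$ and $\mathcal G_1$ is closed under inverses. Let $\mathcal G_n=\{g_1\circ\cdots\circ g_n:g_i\in\mathcal G_1\}$, $\mathcal G_n^x=\{g\in\mathcal G_n:x\in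 D_g\}$, $B_n(x,\varepsilon)=\{y: d(g(x),g(y))<\varepsilon\ \forall g\in\mathcal G_n^x\cap\mathcal G_n^y\}$, and $\Phi_\delta(x)=\{y: d(g(x),g(y))\le\delta\ \forall n\in\mathbb N,\ \forall g\in\mathcal G_n^x\cap\mathcal G_n^y\}$. $\mu$ is $\mathcal G$-invariant if $\mu(g(A))=\mu(A)$ for all $g\in\mathcal G$ and Borel $A\subset D_g$; a Borel set $A$ is invariant if $g(A\cap D_g)\subset A$ for all $g\in\mathcal G$; an invariant $\mu$ is ergodic if every invariant Borel set has measure $0$ or $1$. $\mu$ is $(\mathcal G,\mathcal G_1)$-homogeneous if $\mu(K)<\infty$ for every compact $K$, there is a compact $K_0$ with $\mu(K_0)>0$, and for every $\varepsilon>0$ there exist $\delta>0$, $c>0$ with $\mu(B_n(y,\delta))\le c\,\mu(B_n(x,\varepsilon))$ for all $n\in\mathbb N$, $x,y\in X$. The local upper measure entropy is $\overline{h}_\mu((\mathcal G,\mathcal G_1),x)=\lim_{\varepsilon\to0}\limsup_{n\to\infty}-\frac1n\log\mu(B_n(x,\varepsilon))$. *)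

theory Defs
  imports "HOL-Probability.Probability"
begin

definition phomeo :: "('a::topological_space \<Rightarrow> 'a option) set" where
  "phomeo = {g. open (dom g) \<and> open (ran g) \<and>
     (\<exists>h. homeomorphism (dom g) (ran g) (\<lambda>x. the (g x)) h)}"

definition pinv :: "('a \<Rightarrow> 'a option) \<Rightarrow> ('a \<Rightarrow> 'a option)" where
  "pinv g = (\<lambda>y. if y \<in> ran g then Some (the_inv_into (dom g) (\<lambda>x. the (g x)) y) else None)"

definition pseudogroup :: "('a::topological_space \<Rightarrow> 'a option) set \<Rightarrow> bool" where
  "pseudogroup G \<longleftrightarrow> G \<subseteq> phomeo \<and> Some \<in> G
     \<and> (\<forall>f\<in>G. \<forall>g\<in>G. f \<circ>\<^sub>m g \<in> G)
     \<and> (\<forall>f\<in>G. pinv f \<in> G)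
     \<and> (\<forall>f\<in>G. \<forall>U. open U \<and> U \<subseteq> dom f \<longrightarrow> f |` U \<in> G)
     \<and> (\<forall>g\<in>phomeo. (\<exists>\<U>. (\<forall>U\<in>\<U>. open U) \<and> \<Union>\<U> = dom g \<and> (\<forall>U\<in>\<U>. g |` U \<in> G))
            \<longrightarrow> g \<in> G)"

definition comp_list :: "('a \<Rightarrow> 'a option) list \<Rightarrow> ('a \<Rightarrow> 'a option)" where
  "comp_list gs = foldr (\<lambda>g h. g \<circ>\<^sub>m h) gs Some"

definition generates ::
  "('a::topological_space \<Rightarrow> 'a option) set \<Rightarrow> ('a \<Rightarrow> 'a option) set \<Rightarrow> bool" where
  "generates G1 G \<longleftrightarrow> G1 \<subseteq> phomeo \<and> (\<Union>g\<in>G1. dom g \<union> ran g) = UNIV \<and>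
     G = {g \<in> phomeo. \<forall>x\<in>dom g. \<exists>gs. set gs \<subseteq> G1 \<union> pinv ` G1 \<and>
            (\<exists>U. open U \<and> x \<in> U \<and> U \<subseteq> dom g \<and> U \<subseteq> dom (comp_list gs) \<and>
                 (\<forall>y\<in>U. g y = comp_list gs y))}"

definition symmetric_gen :: "('a \<Rightarrow> 'a option) set \<Rightarrow> bool" where
  "symmetric_gen G1 \<longleftrightarrow> Some \<in> G1 \<and> (\<forall>g\<in>G1. pinv g \<in> G1)"

definition Gn :: "('a \<Rightarrow> 'a option) set \<Rightarrow> nat \<Rightarrow> ('a \<Rightarrow> 'a option) set" where
  "Gn G1 n = {comp_list gs | gs. length gs = n \<and> set gs \<subseteq> G1}"

definition Bowen_ball :: "('a::metric_space \<Rightarrow> 'a option) set \<Rightarrow> nat \<Rightarrow> 'a \<Rightarrow> real \<Rightarrow> 'a set" where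
  "Bowen_ball G1 n x \<epsilon> = {y. \<forall>g\<in>Gn G1 n. x \<in> dom g \<and> y \<in> dom g \<longrightarrow>
                                   dist (the (g x)) (the (g y)) < \<epsilon>}"

definition Phi :: "('a::metric_space \<Rightarrow> 'a option) set \<Rightarrow> real \<Rightarrow> 'a \<Rightarrow> 'a set" where
  "Phi G1 \<delta> x = {y. \<forall>n\<ge>1. \<forall>g\<in>Gn G1 n. x \<in> dom g \<and> y \<in> dom g \<longrightarrow>
                                   dist (the (g x)) (the (g y)) \<le> \<delta>}"

definition G_invariant_measure :: "('a::topological_space \<Rightarrow> 'a option) set \<Rightarrow> 'a measure \<Rightarrow> bool" where
  "G_invariant_measure G \<mu> \<longleftrightarrow> (\<forall>g\<in>G. \<forall>A\<in>sets borel. A \<subseteq> dom g \<longrightarrow>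
      emeasure \<mu> ((\<lambda>x. the (g x)) ` A) = emeasure \<mu> A)"

definition G_invariant_set :: "('a::topological_space \<Rightarrow> 'a option) set \<Rightarrow> 'a set \<Rightarrow> bool" where
  "G_invariant_set G A \<longleftrightarrow> A \<in> sets borel \<and>
      (\<forall>g\<in>G. (\<lambda>x. the (g x)) ` (A \<inter> dom g) \<subseteq> A)"

definition G_ergodic :: "('a::topological_space \<Rightarrow> 'a option) set \<Rightarrow> 'a measure \<Rightarrow> bool" where
  "G_ergodic G \<mu> \<longleftrightarrow> G_invariant_measure G \<mu> \<and>
      (\<forall>A. G_invariant_set G A \<longrightarrow> emeasure \<mu> A = 0 \<or> emeasure \<mu> A = 1)"

definition homogeneous :: "('a::metric_space \<Rightarrow> 'a option) set \<Rightarrow> 'a measure \<Rightarrow> bool" where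
  "homogeneous G1 \<mu> \<longleftrightarrow> (\<forall>K. compact K \<longrightarrow> emeasure \<mu> K < \<infinity>) \<and>
     (\<exists>K0. compact K0 \<and> emeasure \<mu> K0 > 0) \<and>
     (\<forall>\<epsilon>>0. \<exists>\<delta>>0. \<exists>c>0. \<forall>n\<ge>1. \<forall>x y.
         emeasure \<mu> (Bowen_ball G1 n y \<delta>) \<le> ennreal c * emeasure \<mu> (Bowen_ball G1 n x \<epsilon>))"

definition neg_log :: "ennreal \<Rightarrow> ereal" where
  "neg_log m = (if m = 0 then \<infinity> else ereal (- ln (enn2real m)))"

definition local_upper_entropy :: "('a::metric_space \<Rightarrow> 'a option) set \<Rightarrow> 'a measure \<Rightarrow> 'a \<Rightarrow> ereal" where
  "local_upper_entropy G1 \<mu> x =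
     Lim (at_right 0) (\<lambda>\<epsilon>::real. limsup (\<lambda>n. ereal (1 / real n) * neg_log (emeasure \<mu> (Bowen_ball G1 n x \<epsilon>))))"

end

theory Submission
  imports Defs
begin

lemma comp_list_props:
  assumes "G1 \<subseteq> phomeo" "set gs \<subseteq> G1"
  shows "open (dom (comp_list gs)) \<and> continuous_on (dom (comp_list gs)) (\<lambda>x. the (comp_list gs x))"
  using assms(2)
proof (induction gs)
  case Nil
  then show ?case by (simp add: comp_list_def continuous_on_id)
next
  case (Cons f gs)
  define h where "h = comp_list gs"
  have IH: "open (dom h)" "continuous_on (dom h) (\<lambda>x. the (h x))" using Cons h_def by auto
  have fp: "f \<in> phomeo" using Cons assms(1) by auto
  then have of: "open (dom f)" and cf: "continuous_on (dom f) (\<lambda>x. the (f x))"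
    unfolding phomeo_def homeomorphism_def by auto
  have eq: "comp_list (f # gs) = f \<circ>\<^sub>m h" by (simp add: comp_list_def h_def)
  have D: "dom (f \<circ>\<^sub>m h) = dom h \<inter> (\<lambda>x. the (h x)) -` dom f"
    by (auto simp: map_comp_def dom_def split: option.splits)
  have o: "open (dom (f \<circ>\<^sub>m h))" unfolding D
    using iffD1[OF continuous_on_open_vimage[OF IH(1)] IH(2), rule_format, OF of] by (simp add: Int_commute)
  have c1: "continuous_on (dom (f \<circ>\<^sub>m h)) (\<lambda>x. the (h x))"
    using IH(2) D continuous_on_subset by (metis inf_le1)
  have c2: "continuous_on (dom (f \<circ>\<^sub>m h)) (\<lambda>x. the (f (the (h x))))"
    by (rule continuous_on_compose2[OF cf c1]) (auto simp: D)
  have c3: "continuous_on (dom (f \<circ>\<^sub>m h)) (\<lambda>x. the ((f \<circ>\<^sub>m h) x))"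
    by (rule continuous_on_cong[THEN iffD1, OF refl _ c2])
       (auto simp: map_comp_def D dom_def split: option.splits)
  show ?case using o c3 eq by simp
qed

lemma Gn_finite: "finite G1 \<Longrightarrow> finite (Gn G1 n)"
proof -
  assume "finite G1"
  have "Gn G1 n = comp_list ` {gs. set gs \<subseteq> G1 \<and> length gs = n}"
    unfolding Gn_def by auto
  then show ?thesis using finite_lists_length_eq[OF \<open>finite G1\<close>] by simp
qed

lemma Bowen_ball_borel:
  assumes "G1 \<subseteq> phomeo" "finite G1"
  shows "Bowen_ball G1 n x e \<in> sets borel"
proof -
  have S: "{y \<in> space borel. x \<in> dom g \<and> y \<in> dom g \<longrightarrow> dist (the (g x)) (the (g y)) < e} \<in> sets borel"
    if gG: "g \<in> Gn G1 n" for g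
  proof -
    obtain gs where g: "g = comp_list gs" "set gs \<subseteq> G1" using gG unfolding Gn_def by blast
    have o: "open (dom g)" and c: "continuous_on (dom g) (\<lambda>x. the (g x))"
      using comp_list_props[OF assms(1) g(2)] g(1) by auto
    show ?thesis
    proof (cases "x \<in> dom g")
      case False then show ?thesis by simp
    next
      case True
      have op: "open (dom g \<inter> (\<lambda>y. the (g y)) -` ball (the (g x)) e)"
        using iffD1[OF continuous_on_open_vimage[OF o] c, rule_format, of "ball (the (g x)) e"] by (simp add: Int_commute)
      have "{y \<in> space borel. x \<in> dom g \<and> y \<in> dom g \<longrightarrow> dist (the (g x)) (the (g y)) < e}
          = (- dom g) \<union> (dom g \<inter> (\<lambda>y. the (g y)) -` ball (the (g x)) e)"
        using True by (auto simp: dist_commute)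
      moreover have "(- dom g) \<union> (dom g \<inter> (\<lambda>y. the (g y)) -` ball (the (g x)) e) \<in> sets borel"
        using o op by (intro sets.Un) (auto intro: borel_closed)
      ultimately show ?thesis by simp
    qed
  qed
  have "{y \<in> space borel. \<forall>g\<in>Gn G1 n. x \<in> dom g \<and> y \<in> dom g \<longrightarrow> dist (the (g x)) (the (g y)) < e} \<in> sets borel"
    by (rule sets.sets_Collect_finite_All[OF S Gn_finite[OF assms(2)]])
  then show ?thesis unfolding Bowen_ball_def by simp
qed

theorem theoremB:
  fixes G G1 :: "('a::metric_space \<Rightarrow> 'a option) set"
    and \<mu> :: "'a measure"
  assumes "compact (UNIV :: 'a set)"
    and "pseudogroup G"
    and "generates G1 G" and "finite G1" and "symmetric_gen G1"
    and "prob_space \<mu>" and "sets \<mu> = sets borel"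
    and "G_ergodic G \<mu>"
    and "homogeneous G1 \<mu>"
    and "\<forall>x. local_upper_entropy G1 \<mu> x > 0"
  shows "\<exists>\<delta>>0. AE x in \<mu>. emeasure \<mu> (Phi G1 \<delta> x) = 0"
proof -
  interpret P: prob_space \<mu> by fact
  have G1p: "G1 \<subseteq> phomeo" using assms(3) unfolding generates_def by auto
  define F where "F x e = limsup (\<lambda>n. ereal (1 / real n) * neg_log (emeasure \<mu> (Bowen_ball G1 n x e)))" for x e
  have nl_nonneg: "0 \<le> neg_log (emeasure \<mu> A)" for A
  proof -
    have "enn2real (emeasure \<mu> A) \<le> 1"
      using P.measure_le_1 by (simp add: P.emeasure_eq_measure)
    moreover have "emeasure \<mu> A \<noteq> 0 \<Longrightarrow> 0 < enn2real (emeasure \<mu> A)"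
      by (simp add: P.emeasure_eq_measure zero_less_measure_iff)
    ultimately show ?thesis unfolding neg_log_def by auto
  qed
  have F_nonneg: "0 \<le> F x e" for x e
    unfolding F_def
  proof (rule le_Limsup)
    show "\<forall>\<^sub>F n in sequentially. 0 \<le> ereal (1 / real n) * neg_log (emeasure \<mu> (Bowen_ball G1 n x e))"
    proof (rule always_eventually, rule allI)
      fix n
      have "0 \<le> ereal (1 / real n)" by simp
      moreover note nl_nonneg[of "Bowen_ball G1 n x e"]
      ultimately show "0 \<le> ereal (1 / real n) * neg_log (emeasure \<mu> (Bowen_ball G1 n x e))" by simp
    qed
  qed simp
  obtain x0 :: 'a where True by simp
  have "\<exists>e0>0. F x0 e0 > 0"
  proof (rule ccontr)
    assume "\<not> ?thesis"
    then have z: "\<And>e. e > 0 \<Longrightarrow> F x0 e = 0" using F_nonneg by (meson antisym not_le)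
    have "((F x0) \<longlongrightarrow> 0) (at_right 0)"
      by (rule tendsto_eventually) (auto simp: eventually_at_right_less z eventually_at_right_field intro: exI[of _ 1])
    then have "Lim (at_right (0::real)) (F x0) = 0"
      by (intro tendsto_Lim) auto
    moreover have "local_upper_entropy G1 \<mu> x0 = Lim (at_right 0) (F x0)"
      unfolding local_upper_entropy_def F_def by simp
    ultimately have "local_upper_entropy G1 \<mu> x0 = 0" by simp
    moreover have "local_upper_entropy G1 \<mu> x0 > 0" using assms(10) by blast
    ultimately show False by simp
  qed
  then obtain e0 where e0: "e0 > 0" "F x0 e0 > 0" by auto
  obtain d0 c where dc: "d0 > 0" "c > 0"
    "\<And>n x y. n \<ge> 1 \<Longrightarrow> emeasure \<mu> (Bowen_ball G1 n y d0) \<le> ennreal c * emeasure \<mu> (Bowen_ball G1 n x e0)"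
  proof -
    have "\<exists>\<delta>>0. \<exists>c>0. \<forall>n\<ge>1. \<forall>x y.
         emeasure \<mu> (Bowen_ball G1 n y \<delta>) \<le> ennreal c * emeasure \<mu> (Bowen_ball G1 n x e0)"
      using assms(9) e0(1) unfolding homogeneous_def by blast
    then show ?thesis using that by blast
  qed
  have all0: "emeasure \<mu> (Phi G1 (d0/2) y) = 0" for y
  proof (rule ccontr)
    assume ne: "emeasure \<mu> (Phi G1 (d0/2) y) \<noteq> 0"
    define m where "m = measure \<mu> (Phi G1 (d0/2) y)"
    have mpos: "m > 0" using ne unfolding m_def
      by (simp add: P.emeasure_eq_measure zero_less_measure_iff)
    have Pin: "Phi G1 (d0/2) y \<in> sets \<mu>" using ne emeasure_notin_sets by blast
    have lb: "m / c \<le> measure \<mu> (Bowen_ball G1 n x0 e0)" if n: "n \<ge> 1" for n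
    proof -
      have dd: "dist (the (g y)) (the (g z)) \<le> d0/2"
        if "z \<in> Phi G1 (d0/2) y" "g \<in> Gn G1 n" "y \<in> dom g" "z \<in> dom g" for z g
        using that n unfolding Phi_def by blast
      have sub: "Phi G1 (d0/2) y \<subseteq> Bowen_ball G1 n y d0"
        unfolding Bowen_ball_def
      proof (intro subsetI CollectI ballI impI)
        fix z g assume "z \<in> Phi G1 (d0/2) y" "g \<in> Gn G1 n" "y \<in> dom g \<and> z \<in> dom g"
        then have "dist (the (g y)) (the (g z)) \<le> d0/2" using dd by blast
        then show "dist (the (g y)) (the (g z)) < d0" using dc(1) by simp
      qed
      have Bin: "Bowen_ball G1 n y d0 \<in> sets \<mu>" for n
        using Bowen_ball_borel[OF G1p assms(4)] assms(7) by simp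
      have "m \<le> measure \<mu> (Bowen_ball G1 n y d0)"
        unfolding m_def by (rule P.finite_measure_mono[OF sub Bin])
      also have "ennreal (measure \<mu> (Bowen_ball G1 n y d0)) \<le> ennreal c * ennreal (measure \<mu> (Bowen_ball G1 n x0 e0))"
        using dc(3)[OF n, of y x0] by (simp add: P.emeasure_eq_measure)
      then have "measure \<mu> (Bowen_ball G1 n y d0) \<le> c * measure \<mu> (Bowen_ball G1 n x0 e0)"
        using dc(2) by (simp add: ennreal_mult[symmetric] ennreal_le_iff)
      finally show ?thesis using dc(2) by (simp add: field_simps)
    qed
    define K where "K = max 0 (- ln (m / c))"
    have term_le: "ereal (1 / real n) * neg_log (emeasure \<mu> (Bowen_ball G1 n x0 e0)) \<le> ereal (K / real n)"
      if n: "n \<ge> 1" for n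
    proof -
      let ?b = "measure \<mu> (Bowen_ball G1 n x0 e0)"
      have bpos: "?b > 0" using lb[OF n] mpos dc(2) by (smt (verit) divide_pos_pos)
      have "neg_log (emeasure \<mu> (Bowen_ball G1 n x0 e0)) = ereal (- ln ?b)"
        using bpos unfolding neg_log_def by (simp add: P.emeasure_eq_measure)
      moreover have lk: "- ln ?b \<le> K"
        using lb[OF n] mpos dc(2) bpos unfolding K_def by (smt (verit) divide_pos_pos ln_le_cancel_iff)
      moreover have "- ln ?b / real n \<le> K / real n"
        using divide_right_mono[OF lk, of "real n"] by simp
      ultimately show ?thesis using n by simp
    qed
    have "F x0 e0 \<le> limsup (\<lambda>n. ereal (K / real n))"
      unfolding F_def
      by (rule Limsup_mono) (auto simp: eventually_sequentially intro!: exI[of _ 1] term_le)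
    also have "limsup (\<lambda>n. ereal (K / real n)) = 0"
    proof -
      have "(\<lambda>n. ereal (K / real n)) \<longlonglongrightarrow> ereal 0"
        by (intro tendsto_intros lim_const_over_n)
      then show ?thesis by (simp add: lim_imp_Limsup zero_ereal_def)
    qed
    finally show False using e0(2) by simp
  qed
  show ?thesis
    by (rule exI[of _ "d0/2"]) (use dc(1) all0 in auto)
qed

end
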